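(* Let $G=(N,E)$ be a DAG. Then $\mathcal{P}^G=\mathcal{P}^{G^*}$ if and only if $\mathrm{pa}_G(s)$ and $\mathrm{ch}_G(s)$ are complete for all $s\in N$.
   Context: DAG: finite directed graph without directed cycles; $\mathrm{pa}_G(s)$, $\mathrm{ch}_G(s)$ = parents/children of $s$. $G^*=(N,\{(t,s):(s,t)\in E\})$ is $G$ with all edges reversed. Two nodes are joined if an edge connects them; a set is complete if every pair of its elements is joined. Each node $s$ has a state space $\mathsf{X}_s$ (finite set with counting measure, or finite-dimensional real vector space with Lebesgue measure $\mu_s$), $\mu=\otimes_s\mu_s$; $\mathcal{P}^G$ is the set of probability distributions on $\times_s\mathsf{X}_s$ with $\mu$-density $p(x)=\prod_{s}k^s(x_s\mid x_{\mathrm{pa}_G(s)})$ for some nonnegative measurable $k^s$ with $\int k^s(x_s\mid x_{\mathrm{pa}_G(s)})\,d\mu_s(x_s)=1$. *)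

theory Defs
  imports "HOL-Probability.Probability"
begin

text \<open>A DAG G = (N, E) is given by a node set N and an edge relation E (pairs (s,t) meaning s -> t).\<close>

definition pa :: "('n \<times> 'n) set \<Rightarrow> 'n \<Rightarrow> 'n set" where
  "pa E s = {t. (t, s) \<in> E}"

definition ch :: "('n \<times> 'n) set \<Rightarrow> 'n \<Rightarrow> 'n set" where
  "ch E s = {t. (s, t) \<in> E}"

definition reverse_edges :: "('n \<times> 'n) set \<Rightarrow> ('n \<times> 'n) set" where
  "reverse_edges E = {(t, s). (s, t) \<in> E}"

definition joined :: "('n \<times> 'n) set \<Rightarrow> 'n \<Rightarrow> 'n \<Rightarrow> bool" where
  "joined E a b \<longleftrightarrow> (a, b) \<in> E \<or> (b, a) \<in> E"

definition complete_set :: "('n \<times> 'n) set \<Rightarrow> 'n set \<Rightarrow> bool" where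
  "complete_set E A \<longleftrightarrow> (\<forall>a\<in>A. \<forall>b\<in>A. a \<noteq> b \<longrightarrow> joined E a b)"

text \<open>Admissible state spaces: a finite (nonempty) set with counting measure, or
  R^d (represented as functions on {..<d}) with the product of Lebesgue/Borel measures.\<close>
definition state_space :: "(nat \<Rightarrow> real) measure \<Rightarrow> bool" where
  "state_space Ms \<longleftrightarrow>
     (\<exists>A. finite A \<and> A \<noteq> {} \<and> Ms = count_space A) \<or>
     (\<exists>d. Ms = PiM {..<d} (\<lambda>_. lborel))"

text \<open>k s is a conditional kernel: k s z y = k^s(y | z), z a configuration of the parents.\<close>
definition is_kernel :: "('n \<Rightarrow> 'x measure) \<Rightarrow> 'n set \<Rightarrow> 'n \<Rightarrow> (('n \<Rightarrow> 'x) \<Rightarrow> 'x \<Rightarrow> real) \<Rightarrow> bool" where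
  "is_kernel M P s ks \<longleftrightarrow>
     (\<forall>z\<in>space (PiM P M). \<forall>y\<in>space (M s). 0 \<le> ks z y) \<and>
     (case_prod ks) \<in> borel_measurable (PiM P M \<Otimes>\<^sub>M M s) \<and>
     (\<forall>z\<in>space (PiM P M). (\<integral>\<^sup>+ y. ennreal (ks z y) \<partial>M s) = 1)"

definition DAG_model :: "'n set \<Rightarrow> ('n \<times> 'n) set \<Rightarrow> ('n \<Rightarrow> 'x measure) \<Rightarrow> ('n \<Rightarrow> 'x) measure set" where
  "DAG_model N E M = {P. prob_space P \<and>
     (\<exists>k. (\<forall>s\<in>N. is_kernel M (pa E s) s (k s)) \<and>
          P = density (PiM N M) (\<lambda>x. ennreal (\<Prod>s\<in>N. k s (restrict x (pa E s)) (x s))))}"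

end

theory Submission
  imports Defs
begin

context product_sigma_finite
begin

lemma distr_upd:
  assumes "finite I" "i \<notin> I"
  shows "distr (PiM I M \<Otimes>\<^sub>M M i) (PiM (insert i I) M) (\<lambda>(f,y). f(i:=y)) = PiM (insert i I) M"
proof (rule PiM_eqI)
  show "finite (insert i I)" using assms by simp
  show "sets (distr (PiM I M \<Otimes>\<^sub>M M i) (PiM (insert i I) M) (\<lambda>(f,y). f(i:=y))) = sets (PiM (insert i I) M)"
    by simp
  fix A assume A: "\<And>j. j \<in> insert i I \<Longrightarrow> A j \<in> sets (M j)"
  interpret pair_sigma_finite "PiM I M" "M i"
    by (simp add: assms(1) pair_sigma_finite.intro sigma_finite sigma_finite_measures)
  have "(\<lambda>(f,y). f(i:=y)) -` PiE (insert i I) A \<inter> space (PiM I M \<Otimes>\<^sub>M M i) = PiE I A \<times> A i"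
    using A[THEN sets.sets_into_space] assms(2)
    by (auto simp: space_pair_measure space_PiM PiE_def Pi_iff extensional_def split: if_splits) 
  then have "emeasure (distr (PiM I M \<Otimes>\<^sub>M M i) (PiM (insert i I) M) (\<lambda>(f,y). f(i:=y))) (PiE (insert i I) A)
     = emeasure (PiM I M \<Otimes>\<^sub>M M i) (PiE I A \<times> A i)"
    using A by (subst emeasure_distr) (auto intro!: sets_PiM_I_finite assms)
  also have "\<dots> = emeasure (PiM I M) (PiE I A) * emeasure (M i) (A i)"
    using A by (intro sigma_finite_measure.emeasure_pair_measure_Times sigma_finite_measures) (auto intro!: sets_PiM_I_finite assms)
  also have "\<dots> = (\<Prod>j\<in>insert i I. emeasure (M j) (A j))"
    using A assms by (simp add: emeasure_PiM mult.commute)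
  finally show "emeasure (distr (PiM I M \<Otimes>\<^sub>M M i) (PiM (insert i I) M) (\<lambda>(f,y). f(i:=y))) (PiE (insert i I) A) = (\<Prod>j\<in>insert i I. emeasure (M j) (A j))" .
qed

lemma AE_upd_split:
  assumes "finite I" "i \<notin> I" "AE x in PiM (insert i I) M. Q x"
  shows "AE z in PiM I M. AE y in M i. Q (z(i:=y))"
proof -
  interpret pair_sigma_finite "PiM I M" "M i"
    by (simp add: assms(1) pair_sigma_finite.intro sigma_finite sigma_finite_measures)
  have "AE p in PiM I M \<Otimes>\<^sub>M M i. Q ((\<lambda>(f,y). f(i:=y)) p)"
    by (rule AE_distrD[OF measurable_add_dim]) (subst distr_upd[OF assms(1,2)], rule assms(3))
  then have "AE p in PiM I M \<Otimes>\<^sub>M M i. Q ((fst p)(i := snd p))"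
    by (simp add: case_prod_beta)
  from AE_pair[OF this] show ?thesis by simp
qed

lemma AE_upd_lift:
  assumes "finite I" "i \<notin> I" and meas: "{x\<in>space (PiM (insert i I) M). Q x} \<in> sets (PiM (insert i I) M)"
    and ae: "AE z in PiM I M. AE y in M i. Q (z(i:=y))"
  shows "AE x in PiM (insert i I) M. Q x"
proof -
  interpret pair_sigma_finite "PiM I M" "M i"
    by (simp add: assms(1) pair_sigma_finite.intro sigma_finite sigma_finite_measures)
  have m: "{p \<in> space (PiM I M \<Otimes>\<^sub>M M i). Q ((\<lambda>(f,y). f(i:=y)) p)} \<in> sets (PiM I M \<Otimes>\<^sub>M M i)"
  proof -
    have "{p \<in> space (PiM I M \<Otimes>\<^sub>M M i). Q ((\<lambda>(f,y). f(i:=y)) p)} = 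
      (\<lambda>(f,y). f(i:=y)) -` {x\<in>space (PiM (insert i I) M). Q x} \<inter> space (PiM I M \<Otimes>\<^sub>M M i)"
      using measurable_space[OF measurable_add_dim, of _ I M i] by auto
    then show ?thesis using measurable_sets[OF measurable_add_dim meas] by simp
  qed
  have "AE p in PiM I M \<Otimes>\<^sub>M M i. Q ((\<lambda>(f,y). f(i:=y)) p)"
    using AE_pair_measure[OF m] ae by (simp add: case_prod_beta)
  then have "AE x in distr (PiM I M \<Otimes>\<^sub>M M i) (PiM (insert i I) M) (\<lambda>(f,y). f(i:=y)). Q x"
    by (subst AE_distr_iff[OF measurable_add_dim]) (use meas in auto)
  then show ?thesis by (subst (asm) distr_upd[OF assms(1,2)])
qed

lemma AE_merge_split:
  assumes "I \<inter> J = {}" "finite I" "finite J" "AE x in PiM (I \<union> J) M. Q x"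
  shows "AE x in PiM I M. AE y in PiM J M. Q (merge I J (x,y))"
proof -
  interpret pair_sigma_finite "PiM I M" "PiM J M"
    by (simp add: assms pair_sigma_finite.intro sigma_finite sigma_finite_measures)
  have "AE p in PiM I M \<Otimes>\<^sub>M PiM J M. Q (merge I J p)"
    by (rule AE_distrD[OF measurable_merge]) (subst distr_merge[OF assms(1,2,3)], rule assms(4))
  from AE_pair[OF this] show ?thesis by simp
qed

lemma AE_restrict_lift:
  assumes "I \<subseteq> J" "finite J" and meas: "{z\<in>space (PiM I M). Q z} \<in> sets (PiM I M)"
    and ae: "AE z in PiM I M. Q z"
  shows "AE x in PiM J M. Q (restrict x I)"
proof -
  have fin: "finite I" "finite (J - I)" using assms finite_subset by auto
  have IJ: "I \<inter> (J - I) = {}" and U: "I \<union> (J - I) = J" using assms by auto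
  interpret pair_sigma_finite "PiM I M" "PiM (J-I) M"
    by (simp add: fin pair_sigma_finite.intro sigma_finite sigma_finite_measures)
  have mJ: "{x\<in>space (PiM J M). Q (restrict x I)} \<in> sets (PiM J M)"
  proof -
    have "{x\<in>space (PiM J M). Q (restrict x I)} = (\<lambda>x. restrict x I) -` {z\<in>space (PiM I M). Q z} \<inter> space (PiM J M)"
      using measurable_space[OF measurable_restrict_subset[OF assms(1)]] by auto
    then show ?thesis using measurable_sets[OF measurable_restrict_subset[OF assms(1)] meas] by simp
  qed
  have mr: "(\<lambda>p. restrict (merge I (J - I) p) I) \<in> measurable (PiM I M \<Otimes>\<^sub>M PiM (J-I) M) (PiM I M)"
    using measurable_comp[OF measurable_merge[of I "J - I" M] measurable_restrict_subset[of I "I \<union> (J - I)" M]]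
    by (simp add: comp_def)
  have m: "{p \<in> space (PiM I M \<Otimes>\<^sub>M PiM (J-I) M). Q (restrict (merge I (J-I) p) I)} \<in> sets (PiM I M \<Otimes>\<^sub>M PiM (J-I) M)"
  proof -
    have "{p \<in> space (PiM I M \<Otimes>\<^sub>M PiM (J-I) M). Q (restrict (merge I (J-I) p) I)} =
       (\<lambda>p. restrict (merge I (J - I) p) I) -` {z\<in>space (PiM I M). Q z} \<inter> space (PiM I M \<Otimes>\<^sub>M PiM (J-I) M)"
      using measurable_space[OF mr] by auto
    then show ?thesis using measurable_sets[OF mr meas] by simp
  qed
  have "AE x in PiM I M. AE y in PiM (J-I) M. Q (restrict (merge I (J-I) (x,y)) I)"
    using ae AE_space[of "PiM I M"] by eventually_elim (simp add: IJ space_PiM PiE_def extensional_restrict)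
  then have "AE p in PiM I M \<Otimes>\<^sub>M PiM (J-I) M. Q (restrict (merge I (J-I) p) I)"
    using AE_pair_measure[OF m] by (simp add: case_prod_beta)
  then have "AE x in distr (PiM I M \<Otimes>\<^sub>M PiM (J-I) M) (PiM (I \<union> (J-I)) M) (merge I (J-I)). Q (restrict x I)"
    by (subst AE_distr_iff[OF measurable_merge]) (use mJ U in auto)
  then have "AE x in PiM (I \<union> (J-I)) M. Q (restrict x I)" by (subst (asm) distr_merge[OF IJ fin])
  then show ?thesis unfolding U .
qed

end

definition dens :: "'n set \<Rightarrow> ('n \<times> 'n) set \<Rightarrow> ('n \<Rightarrow> ('n \<Rightarrow> 'x) \<Rightarrow> 'x \<Rightarrow> real) \<Rightarrow> ('n \<Rightarrow> 'x) \<Rightarrow> real" where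
  "dens B E k x = (\<Prod>s\<in>B. k s (restrict x (pa E s)) (x s))"

lemma sink_exists:
  assumes "finite S" "S \<noteq> {}" "acyclic E"
  shows "\<exists>t\<in>S. \<forall>u\<in>S. (t,u) \<notin> E"
proof -
  define R where "R = (E \<inter> S \<times> S)\<inverse>"
  have "acyclic (E \<inter> S \<times> S)" by (rule acyclic_subset[OF assms(3)]) blast
  then have ac: "acyclic R" unfolding R_def by (simp only: acyclic_converse)
  have fin: "finite R" unfolding R_def using assms(1) by (simp only: finite_converse) (rule finite_subset[of _ "S \<times> S"], blast, simp)
  have "wf R" by (rule finite_acyclic_wf[OF fin ac])
  then obtain z where z: "z \<in> S" "\<And>y. (y,z) \<in> R \<Longrightarrow> y \<notin> S"
    using assms(2) unfolding wf_eq_minimal by blast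
  show ?thesis
  proof (intro bexI[OF _ z(1)] ballI)
    fix u assume "u \<in> S"
    then show "(z,u) \<notin> E" using z(2)[of u] z(1) unfolding R_def by blast
  qed
qed

lemma kernel_meas:
  assumes "is_kernel M P s ks" "P \<subseteq> I" "s \<in> I"
  shows "(\<lambda>x. ks (restrict x P) (x s)) \<in> borel_measurable (PiM I M)"
proof -
  have "case_prod ks \<in> borel_measurable (PiM P M \<Otimes>\<^sub>M M s)" using assms(1) by (simp add: is_kernel_def)
  moreover have "(\<lambda>x. (restrict x P, x s)) \<in> measurable (PiM I M) (PiM P M \<Otimes>\<^sub>M M s)"
    using assms(2,3) by (intro measurable_Pair measurable_restrict_subset measurable_component_singleton)
  ultimately have "case_prod ks \<circ> (\<lambda>x. (restrict x P, x s)) \<in> borel_measurable (PiM I M)"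
    by (intro measurable_comp) 
  then show ?thesis by (simp add: comp_def)
qed

lemma kernel_meas2:
  assumes "is_kernel M P s ks" "r \<in> space (PiM P M)"
  shows "ks r \<in> borel_measurable (M s)"
proof -
  have "case_prod ks \<in> borel_measurable (PiM P M \<Otimes>\<^sub>M M s)" using assms(1) by (simp add: is_kernel_def)
  from measurable_comp[OF measurable_Pair1'[OF assms(2), of "M s"] this] show ?thesis by (simp add: comp_def)
qed

lemma kernel_nonneg:
  assumes "is_kernel M P s ks" "P \<subseteq> I" "s \<in> I" "x \<in> space (PiM I M)"
  shows "0 \<le> ks (restrict x P) (x s)"
proof -
  have "restrict x P \<in> space (PiM P M)" using assms(2,4) by (auto simp: space_PiM)
  moreover have "x s \<in> space (M s)" using assms(3,4) by (auto simp: space_PiM)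
  ultimately show ?thesis using assms(1) by (simp add: is_kernel_def)
qed

lemma dens_meas:
  assumes "\<forall>s\<in>B. is_kernel M (pa E s) s (k s)" "\<forall>s\<in>B. pa E s \<subseteq> I" "B \<subseteq> I"
  shows "dens B E k \<in> borel_measurable (PiM I M)"
  unfolding dens_def
proof (rule borel_measurable_prod)
  fix s assume "s \<in> B"
  then show "(\<lambda>x. k s (restrict x (pa E s)) (x s)) \<in> borel_measurable (PiM I M)"
    using assms by (intro kernel_meas) auto
qed

lemma dens_nonneg:
  assumes "\<forall>s\<in>B. is_kernel M (pa E s) s (k s)" "\<forall>s\<in>B. pa E s \<subseteq> I" "B \<subseteq> I" "x \<in> space (PiM I M)"
  shows "0 \<le> dens B E k x"
  unfolding dens_def
proof (rule prod_nonneg)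
  fix s assume "s \<in> B"
  then show "0 \<le> k s (restrict x (pa E s)) (x s)"
    using assms by (intro kernel_nonneg[where I=I and M=M]) auto
qed

lemma dens_cong:
  assumes "\<forall>s\<in>B. \<forall>i\<in>insert s (pa E s). x i = y i"
  shows "dens B E k x = dens B E k y"
  unfolding dens_def
proof (rule prod.cong[OF refl])
  fix s assume s: "s \<in> B"
  have "restrict x (pa E s) = restrict y (pa E s)" using assms s by (auto simp: restrict_def)
  moreover have "x s = y s" using assms s by auto
  ultimately show "k s (restrict x (pa E s)) (x s) = k s (restrict y (pa E s)) (y s)" by simp
qed

lemma merge_upd:
  assumes "t \<notin> A"
  shows "merge A (insert t J) (x, y(t:=z)) = (merge A J (x,y))(t:=z)"
  using assms by (auto simp: merge_def fun_eq_iff)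

context product_sigma_finite
begin

lemma marginal:
  assumes "finite B" "A \<subseteq> B" "\<forall>s\<in>B. pa E s \<subseteq> B" "\<forall>s\<in>A. pa E s \<subseteq> A" "acyclic E"
    and kern: "\<forall>s\<in>B. is_kernel M (pa E s) s (k s)" and x: "x \<in> space (PiM A M)"
  shows "(\<integral>\<^sup>+ y. ennreal (dens B E k (merge A (B-A) (x,y))) \<partial>PiM (B-A) M) = ennreal (dens A E k x)"
  using assms
proof (induct "card (B - A)" arbitrary: B)
  case 0
  then have "B - A = {}" by (simp add: finite_subset)
  then have BA: "B = A" using 0 by auto
  have "merge A {} (x, \<lambda>k. undefined) = x" using x by (auto simp: merge_def space_PiM PiE_def extensional_def fun_eq_iff)
  then show ?case using BA \<open>B - A = {}\<close> by (simp add: nn_integral_empty)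
next
  case (Suc n)
  have fin: "finite (B - A)" using Suc by simp
  have ne: "B - A \<noteq> {}"
  proof
    assume "B - A = {}" then show False using Suc(2) by (metis card.empty nat.distinct(1))
  qed
  obtain t where t: "t \<in> B - A" "\<forall>u\<in>B-A. (t,u) \<notin> E" using sink_exists[OF fin ne Suc(7)] by blast
  have tB: "\<forall>u\<in>B. (t,u) \<notin> E"
  proof
    fix u assume "u \<in> B"
    show "(t,u) \<notin> E"
    proof
      assume "(t,u) \<in> E"
      then have "u \<notin> B - A" using t by auto
      with \<open>u \<in> B\<close> have "u \<in> A" by auto
      with \<open>(t,u) \<in> E\<close> Suc(6) have "t \<in> A" by (auto simp: pa_def)
      with t show False by auto
    qed
  qed
  have ntt: "(t,t) \<notin> E" using Suc(7) by (meson acyclic_def r_into_trancl')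
  define B' where "B' = B - {t}"
  have BA: "B - A = insert t (B' - A)" and tn: "t \<notin> B' - A" using t by (auto simp: B'_def)
  have paB': "\<forall>s\<in>B'. pa E s \<subseteq> B'" using Suc(5) tB by (auto simp: B'_def pa_def)
  have patB': "pa E t \<subseteq> B'" using Suc(5) t ntt by (auto simp: B'_def pa_def)
  have IH: "(\<integral>\<^sup>+ y. ennreal (dens B' E k (merge A (B'-A) (x,y))) \<partial>PiM (B'-A) M) = ennreal (dens A E k x)"
  proof (rule Suc(1))
    have "B' - A = (B - A) - {t}" by (auto simp: B'_def)
    then show "n = card (B' - A)" using Suc(2) t fin by (simp add: card_Diff_singleton)
    show "finite B'" using Suc(3) by (simp add: B'_def)
    show "A \<subseteq> B'" using Suc(4) t by (auto simp: B'_def)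
    show "\<forall>s\<in>B'. pa E s \<subseteq> B'" by (rule paB')
    show "\<forall>s\<in>A. pa E s \<subseteq> A" by (rule Suc(6))
    show "acyclic E" by (rule Suc(7))
    show "\<forall>s\<in>B'. is_kernel M (pa E s) s (k s)" using Suc(8) by (simp add: B'_def)
    show "x \<in> space (PiM A M)" by (rule Suc(9))
  qed
  have finB'A: "finite (B' - A)" using Suc(3) by (simp add: B'_def)
  have mB: "dens B E k \<in> borel_measurable (PiM B M)" using Suc dens_meas by blast
  have mmerge: "(\<lambda>y. merge A (B-A) (x,y)) \<in> measurable (PiM (B-A) M) (PiM B M)"
  proof -
    have "(\<lambda>y. merge A (B-A) (x,y)) \<in> measurable (PiM (B-A) M) (PiM (A \<union> (B-A)) M)"
      using measurable_comp[OF measurable_Pair1'[OF x, of "PiM (B-A) M"] measurable_merge[of A "B - A" M]]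
      by (simp add: comp_def)
    moreover have "A \<union> (B - A) = B" using Suc(4) by auto
    ultimately show ?thesis by simp
  qed
  have mf: "(\<lambda>y. ennreal (dens B E k (merge A (B-A) (x,y)))) \<in> borel_measurable (PiM (insert t (B'-A)) M)"
    using measurable_comp[OF mmerge mB] BA by (simp add: comp_def)
  have "(\<integral>\<^sup>+ y. ennreal (dens B E k (merge A (B-A) (x,y))) \<partial>PiM (B-A) M)
     = (\<integral>\<^sup>+ y. (\<integral>\<^sup>+ z. ennreal (dens B E k (merge A (B-A) (x,y(t:=z)))) \<partial>M t) \<partial>PiM (B'-A) M)"
  proof -
    have PB: "PiM (B-A) M = PiM (insert t (B'-A)) M" using BA by simp
    show ?thesis by (simp only: PB) (rule product_nn_integral_insert[OF finB'A tn mf])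
  qed
  also have "\<dots> = (\<integral>\<^sup>+ y. ennreal (dens B' E k (merge A (B'-A) (x,y))) \<partial>PiM (B'-A) M)"
  proof (rule nn_integral_cong)
    fix y assume y: "y \<in> space (PiM (B'-A) M)"
    define w where "w = merge A (B'-A) (x,y)"
    have wsp: "w \<in> space (PiM B' M)"
    proof -
      have "w \<in> space (PiM (A \<union> (B'-A)) M)" using x y unfolding w_def
        by (auto simp: space_PiM PiE_def Pi_iff extensional_def merge_def)
      moreover have "A \<union> (B' - A) = B'" using Suc(4) t by (auto simp: B'_def)
      ultimately show ?thesis by simp
    qed
    have eqm: "merge A (B-A) (x,y(t:=z)) = w(t:=z)" for z
      unfolding BA w_def using t by (intro merge_upd) auto
    have dsplit: "dens B E k (w(t:=z)) = dens B' E k w * k t (restrict w (pa E t)) z" for z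
    proof -
      have "dens B E k (w(t:=z)) = dens B' E k (w(t:=z)) * k t (restrict (w(t:=z)) (pa E t)) z"
        unfolding dens_def B'_def using t Suc(3)
        by (subst prod.remove[of B t]) (auto simp: mult.commute)
      moreover have "dens B' E k (w(t:=z)) = dens B' E k w"
        by (rule dens_cong) (use tB in \<open>auto simp: B'_def pa_def\<close>)
      moreover have "restrict (w(t:=z)) (pa E t) = restrict w (pa E t)"
        using ntt by (auto simp: restrict_def pa_def fun_eq_iff)
      ultimately show ?thesis by simp
    qed
    have D0: "0 \<le> dens B' E k w"
      by (rule dens_nonneg[where B=B' and E=E and k=k and I=B' and M=M]) (use Suc(8) paB' wsp in \<open>auto simp: B'_def\<close>)
    have rsp: "restrict w (pa E t) \<in> space (PiM (pa E t) M)" using wsp patB' by (auto simp: space_PiM)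
    have kt: "is_kernel M (pa E t) t (k t)" using Suc(8) t by auto
    have kt1: "(\<integral>\<^sup>+ z. ennreal (k t (restrict w (pa E t)) z) \<partial>M t) = 1"
      using kt rsp by (simp add: is_kernel_def)
    have "(\<integral>\<^sup>+ z. ennreal (dens B E k (merge A (B-A) (x,y(t:=z)))) \<partial>M t)
        = (\<integral>\<^sup>+ z. ennreal (dens B' E k w) * ennreal (k t (restrict w (pa E t)) z) \<partial>M t)"
    proof (rule nn_integral_cong)
      fix z assume "z \<in> space (M t)"
      then have "0 \<le> k t (restrict w (pa E t)) z" using kt rsp by (simp add: is_kernel_def)
      then show "ennreal (dens B E k (merge A (B-A) (x,y(t:=z)))) = ennreal (dens B' E k w) * ennreal (k t (restrict w (pa E t)) z)"
        by (simp add: eqm dsplit ennreal_mult D0)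
    qed
    also have "\<dots> = ennreal (dens B' E k w)"
      using kt1 kernel_meas2[OF kt rsp] 
      by (subst nn_integral_cmult) (auto simp: measurable_ident_sets)
    finally show "(\<integral>\<^sup>+ z. ennreal (dens B E k (merge A (B-A) (x,y(t:=z)))) \<partial>M t) = ennreal (dens B' E k (merge A (B'-A) (x,y)))"
      by (simp add: w_def)
  qed
  also have "\<dots> = ennreal (dens A E k x)" by (rule IH)
  finally show ?case .
qed

end

context product_sigma_finite
begin

lemma dens_integral1:
  assumes "finite B" "\<forall>s\<in>B. pa E s \<subseteq> B" "acyclic E" "\<forall>s\<in>B. is_kernel M (pa E s) s (k s)"
  shows "(\<integral>\<^sup>+ x. ennreal (dens B E k x) \<partial>PiM B M) = 1"
proof -
  have x0: "(\<lambda>_. undefined) \<in> space (PiM {} M)" by (simp add: space_PiM)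
  have "(\<integral>\<^sup>+ y. ennreal (dens B E k (merge {} (B-{}) ((\<lambda>_. undefined),y))) \<partial>PiM (B-{}) M) = ennreal (dens {} E k (\<lambda>_. undefined))"
    by (rule marginal[OF assms(1) _ assms(2) _ assms(3) assms(4) x0]) auto
  moreover have "(\<integral>\<^sup>+ y. ennreal (dens B E k (merge {} (B-{}) ((\<lambda>_. undefined),y))) \<partial>PiM (B-{}) M)
     = (\<integral>\<^sup>+ x. ennreal (dens B E k x) \<partial>PiM B M)"
    unfolding Diff_empty
  proof (rule nn_integral_cong)
    fix y assume "y \<in> space (PiM B M)"
    then have "merge {} B ((\<lambda>_. undefined),y) = y" by (auto simp: merge_def space_PiM PiE_def extensional_def fun_eq_iff)
    then show "ennreal (dens B E k (merge {} B ((\<lambda>_. undefined),y))) = ennreal (dens B E k y)" by simp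
  qed
  ultimately show ?thesis by (simp add: dens_def)
qed

lemma dens_prob:
  assumes "finite B" "\<forall>s\<in>B. pa E s \<subseteq> B" "acyclic E" "\<forall>s\<in>B. is_kernel M (pa E s) s (k s)"
  shows "prob_space (density (PiM B M) (\<lambda>x. ennreal (dens B E k x)))"
proof (rule prob_spaceI)
  have m: "(\<lambda>x. ennreal (dens B E k x)) \<in> borel_measurable (PiM B M)"
    using dens_meas[of B M E k B] assms by auto
  have "emeasure (density (PiM B M) (\<lambda>x. ennreal (dens B E k x))) (space (PiM B M)) = (\<integral>\<^sup>+ x. ennreal (dens B E k x) \<partial>PiM B M)"
    using m by (subst emeasure_density) (auto intro!: nn_integral_cong simp: indicator_def)
  then show "emeasure (density (PiM B M) (\<lambda>x. ennreal (dens B E k x))) (space (density (PiM B M) (\<lambda>x. ennreal (dens B E k x)))) = 1"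
    using dens_integral1[OF assms] by simp
qed

lemma chain_rule:
  assumes "finite V" "\<forall>u\<in>V. pa H u \<subseteq> V" "acyclic H"
    and "\<forall>u\<in>V. \<forall>v\<in>V. u \<noteq> v \<longrightarrow> (u,v) \<in> H \<or> (v,u) \<in> H"
    and "h \<in> borel_measurable (PiM V M)" "\<forall>x\<in>space (PiM V M). 0 \<le> h x"
    and "(\<integral>\<^sup>+ x. ennreal (h x) \<partial>PiM V M) = 1"
    and g: "\<forall>u\<in>V. g u \<in> borel_measurable (M u) \<and> (\<forall>y\<in>space (M u). 0 \<le> g u y) \<and> (\<integral>\<^sup>+ y. ennreal (g u y) \<partial>M u) = 1"
  shows "\<exists>k. (\<forall>u\<in>V. is_kernel M (pa H u) u (k u)) \<and> (AE x in PiM V M. h x = dens V H k x)"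
  using assms
proof (induct "card V" arbitrary: V h)
  case 0
  then have V: "V = {}" by simp
  have sp: "space (PiM {} M) = {\<lambda>_. undefined}" by (simp add: space_PiM)
  have "(\<integral>\<^sup>+ x. ennreal (h x) \<partial>PiM {} M) = ennreal (h (\<lambda>_. undefined))"
    by (rule nn_integral_empty) simp
  then have "h (\<lambda>_. undefined) = 1" using 0 V by simp
  then have "AE x in PiM V M. h x = dens V H k x" for k
    by (intro AE_I2) (simp add: V sp dens_def)
  then show ?case using V by auto
next
  case (Suc n)
  note fin = Suc(3)
  have ne: "V \<noteq> {}" using Suc(2) by auto
  obtain w where w: "w \<in> V" "\<forall>u\<in>V. (w,u) \<notin> H" using sink_exists[OF fin ne Suc(5)] by blast
  have nww: "(w,w) \<notin> H" using w by auto
  define V' where "V' = V - {w}"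
  have VV': "V = insert w V'" and wV': "w \<notin> V'" and finV': "finite V'" using w fin by (auto simp: V'_def)
  have paV': "\<forall>u\<in>V'. pa H u \<subseteq> V'" using Suc(4) w by (auto simp: V'_def pa_def)
  have paw: "pa H w = V'"
  proof
    show "pa H w \<subseteq> V'" using Suc(4) w nww by (auto simp: V'_def pa_def)
    show "V' \<subseteq> pa H w" using Suc(6) w by (auto simp: V'_def pa_def)
  qed
  interpret pair_sigma_finite "PiM V' M" "M w"
    by (simp add: finV' pair_sigma_finite.intro sigma_finite sigma_finite_measures)
  have hm: "h \<in> borel_measurable (PiM (insert w V') M)" using Suc(7) VV' by simp
  have hupd: "(\<lambda>p. h ((fst p)(w := snd p))) \<in> borel_measurable (PiM V' M \<Otimes>\<^sub>M M w)"
    using measurable_comp[OF measurable_add_dim hm] by (simp add: comp_def case_prod_beta)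
  define h' where "h' z = (\<integral>\<^sup>+ y. ennreal (h (z(w:=y))) \<partial>M w)" for z
  have h'm: "h' \<in> borel_measurable (PiM V' M)"
    unfolding h'_def by (rule sigma_finite_measure.borel_measurable_nn_integral[OF sigma_finite_measures[of w]]) (use hupd in \<open>simp add: case_prod_beta\<close>)
  have int_h': "(\<integral>\<^sup>+ z. h' z \<partial>PiM V' M) = 1"
  proof -
    have "(\<integral>\<^sup>+ x. ennreal (h x) \<partial>PiM (insert w V') M) = (\<integral>\<^sup>+ z. h' z \<partial>PiM V' M)"
      unfolding h'_def by (rule product_nn_integral_insert[OF finV' wV']) (use hm in simp)
    then show ?thesis using Suc(9) VV' by simp
  qed
  have fin_h': "AE z in PiM V' M. h' z \<noteq> \<infinity>"
    by (rule nn_integral_PInf_AE[OF h'm]) (simp add: int_h')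
  define h'' where "h'' z = enn2real (h' z)" for z
  have h''m: "h'' \<in> borel_measurable (PiM V' M)" unfolding h''_def using h'm by simp
  have int_h'': "(\<integral>\<^sup>+ z. ennreal (h'' z) \<partial>PiM V' M) = 1"
  proof -
    have "(\<integral>\<^sup>+ z. ennreal (h'' z) \<partial>PiM V' M) = (\<integral>\<^sup>+ z. h' z \<partial>PiM V' M)"
      by (rule nn_integral_cong_AE) (use fin_h' in \<open>auto simp: h''_def less_top\<close>)
    then show ?thesis using int_h' by simp
  qed
  have upd_sp: "z(w:=y) \<in> space (PiM V M)" if "z \<in> space (PiM V' M)" "y \<in> space (M w)" for z y
    using that wV' by (subst VV') (auto simp: space_PiM PiE_def Pi_iff extensional_def)
  obtain k' where k': "\<forall>u\<in>V'. is_kernel M (pa H u) u (k' u)" "AE z in PiM V' M. h'' z = dens V' H k' z"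
  proof -
    have "\<exists>k. (\<forall>u\<in>V'. is_kernel M (pa H u) u (k u)) \<and> (AE x in PiM V' M. h'' x = dens V' H k x)"
    proof (rule Suc(1))
      show "n = card V'" using Suc(2) w fin by (simp add: V'_def)
      show "finite V'" by (rule finV')
      show "\<forall>u\<in>V'. pa H u \<subseteq> V'" by (rule paV')
      show "acyclic H" by (rule Suc(5))
      show "\<forall>u\<in>V'. \<forall>v\<in>V'. u \<noteq> v \<longrightarrow> (u,v) \<in> H \<or> (v,u) \<in> H" using Suc(6) by (auto simp: V'_def)
      show "h'' \<in> borel_measurable (PiM V' M)" by (rule h''m)
      show "\<forall>x\<in>space (PiM V' M). 0 \<le> h'' x" by (simp add: h''_def)
      show "(\<integral>\<^sup>+ x. ennreal (h'' x) \<partial>PiM V' M) = 1" by (rule int_h'')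
      show "\<forall>u\<in>V'. g u \<in> borel_measurable (M u) \<and> (\<forall>y\<in>space (M u). 0 \<le> g u y) \<and> (\<integral>\<^sup>+ y. ennreal (g u y) \<partial>M u) = 1"
        using Suc(10) by (auto simp: V'_def)
    qed
    then show ?thesis using that by blast
  qed
  define kw where "kw z y = (if 0 < h' z \<and> h' z < \<infinity> then h (z(w:=y)) / enn2real (h' z) else g w y)" for z y
  define k where "k = k'(w := kw)"
  have gw: "g w \<in> borel_measurable (M w)" "\<forall>y\<in>space (M w). 0 \<le> g w y" "(\<integral>\<^sup>+ y. ennreal (g w y) \<partial>M w) = 1"
    using Suc(10) w by auto
  have kw_kernel: "is_kernel M V' w kw"
    unfolding is_kernel_def
  proof (intro conjI ballI)
    fix z y assume z: "z \<in> space (PiM V' M)" and y: "y \<in> space (M w)"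
    show "0 \<le> kw z y" using Suc(8) upd_sp[OF z y] gw y by (auto simp: kw_def)
  next
    have [measurable]: "h' \<in> borel_measurable (PiM V' M)" by (rule h'm)
    have [measurable]: "(\<lambda>p. h ((fst p)(w := snd p))) \<in> borel_measurable (PiM V' M \<Otimes>\<^sub>M M w)" by (rule hupd)
    have [measurable]: "g w \<in> borel_measurable (M w)" by (rule gw(1))
    have "(\<lambda>p. if 0 < h' (fst p) \<and> h' (fst p) < \<infinity> then h ((fst p)(w := snd p)) / enn2real (h' (fst p)) else g w (snd p))
       \<in> borel_measurable (PiM V' M \<Otimes>\<^sub>M M w)"
      by measurable
    moreover have "case_prod kw = (\<lambda>p. if 0 < h' (fst p) \<and> h' (fst p) < \<infinity> then h ((fst p)(w := snd p)) / enn2real (h' (fst p)) else g w (snd p))"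
      by (auto simp: kw_def fun_eq_iff)
    ultimately show "case_prod kw \<in> borel_measurable (PiM V' M \<Otimes>\<^sub>M M w)" by simp
  next
    fix z assume z: "z \<in> space (PiM V' M)"
    show "(\<integral>\<^sup>+ y. ennreal (kw z y) \<partial>M w) = 1"
    proof (cases "0 < h' z \<and> h' z < \<infinity>")
      case True
      define c where "c = enn2real (h' z)"
      have hc: "h' z = ennreal c" and c0: "0 < c" using True by (auto simp: c_def enn2real_positive_iff less_top)
      have mz: "(\<lambda>y. ennreal (h (z(w:=y)))) \<in> borel_measurable (M w)"
        using measurable_comp[OF measurable_component_update[OF z wV'] hm] by (simp add: comp_def)
      have "(\<integral>\<^sup>+ y. ennreal (kw z y) \<partial>M w) = (\<integral>\<^sup>+ y. ennreal (h (z(w:=y))) * ennreal (1/c) \<partial>M w)"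
      proof (rule nn_integral_cong)
        fix y assume y: "y \<in> space (M w)"
        have "0 \<le> h (z(w:=y))" using Suc(8) upd_sp[OF z y] by auto
        then show "ennreal (kw z y) = ennreal (h (z(w:=y))) * ennreal (1/c)"
          using True c0 by (simp add: kw_def c_def[symmetric] ennreal_mult[symmetric] divide_inverse)
      qed
      also have "\<dots> = h' z * ennreal (1/c)" unfolding h'_def by (rule nn_integral_multc[OF mz])
      also have "\<dots> = 1" using c0 by (simp add: hc ennreal_mult[symmetric])
      finally show ?thesis .
    next
      case False
      then have "kw z = g w" unfolding kw_def fun_eq_iff by (intro allI if_not_P) (rule False)
      then show ?thesis using gw by simp
    qed
  qed
  have kern: "\<forall>u\<in>V. is_kernel M (pa H u) u (k u)"
    using k'(1) kw_kernel paw VV' wV' by (auto simp: k_def)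
  have dsplit: "dens V H k (z(w:=y)) = dens V' H k' z * kw z y" if z: "z \<in> space (PiM V' M)" for z y
  proof -
    have "dens V H k (z(w:=y)) = dens V' H k (z(w:=y)) * k w (restrict (z(w:=y)) (pa H w)) ((z(w:=y)) w)"
      unfolding dens_def using VV' wV' finV' by (simp add: mult.commute)
    moreover have "dens V' H k (z(w:=y)) = dens V' H k z"
    proof (rule dens_cong, intro ballI)
      fix s i assume "s \<in> V'" "i \<in> insert s (pa H s)"
      then have "i \<in> V'" using paV' by auto
      then show "(z(w:=y)) i = z i" using wV' by auto
    qed
    moreover have "dens V' H k z = dens V' H k' z"
      unfolding dens_def using wV' by (intro prod.cong) (auto simp: k_def)
    moreover have "restrict (z(w:=y)) (pa H w) = z"
      using z wV' paw by (auto simp: space_PiM PiE_def extensional_def fun_eq_iff)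
    ultimately show ?thesis by (simp add: k_def)
  qed
  have "AE x in PiM (insert w V') M. h x = dens V H k x"
  proof (rule AE_upd_lift[OF finV' wV'])
    have "dens V H k \<in> borel_measurable (PiM V M)" using kern Suc(4) by (intro dens_meas) auto
    then show "{x \<in> space (PiM (insert w V') M). h x = dens V H k x} \<in> sets (PiM (insert w V') M)"
      using Suc(7) VV' by simp
    show "AE z in PiM V' M. AE y in M w. h (z(w:=y)) = dens V H k (z(w:=y))"
      using k'(2) fin_h' AE_space
    proof eventually_elim
      case (elim z)
      then have z: "z \<in> space (PiM V' M)" and e: "h'' z = dens V' H k' z" and f: "h' z \<noteq> \<infinity>" by auto
      show ?case
      proof (cases "0 < h' z")
        case True
        then have pos: "0 < enn2real (h' z)" using f by (simp add: enn2real_positive_iff less_top)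
        show ?thesis
        proof (rule AE_I2)
          fix y assume "y \<in> space (M w)"
          show "h (z(w:=y)) = dens V H k (z(w:=y))"
            using True f pos e by (simp add: dsplit[OF z] kw_def h''_def less_top[symmetric])
        qed
      next
        case False
        then have h0: "h' z = 0" by (simp add: not_gr_zero)
        have mz: "(\<lambda>y. ennreal (h (z(w:=y)))) \<in> borel_measurable (M w)"
          using measurable_comp[OF measurable_component_update[OF z wV'] hm] by (simp add: comp_def)
        have "AE y in M w. ennreal (h (z(w:=y))) = 0"
          using h0 nn_integral_0_iff_AE[OF mz] by (simp add: h'_def)
        then show ?thesis using AE_space
        proof eventually_elim
          case (elim y)
          then have "h (z(w:=y)) = 0" using Suc(8) upd_sp[OF z] by (simp add: ennreal_eq_0_iff) (meson order.antisym)
          moreover have "dens V' H k' z = 0" using e h0 by (simp add: h''_def)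
          ultimately show ?case by (simp add: dsplit[OF z])
        qed
      qed
    qed
  qed
  then show ?case using kern VV' by auto
qed

end

lemma reverse_edges_conv: "reverse_edges E = E\<inverse>"
  by (auto simp: reverse_edges_def)

lemma pa_rev[simp]: "pa (reverse_edges E) s = ch E s"
  by (auto simp: pa_def ch_def reverse_edges_def)

lemma ch_rev[simp]: "ch (reverse_edges E) s = pa E s"
  by (auto simp: pa_def ch_def reverse_edges_def)

lemma rev_rev[simp]: "reverse_edges (reverse_edges E) = E"
  by (auto simp: reverse_edges_def)

lemma acyclic_rev[simp]: "acyclic (reverse_edges E) = acyclic E"
  by (simp add: reverse_edges_conv acyclic_converse)

lemma joined_rev[simp]: "joined (reverse_edges E) a b = joined E a b"
  by (auto simp: joined_def reverse_edges_def)

lemma complete_rev[simp]: "complete_set (reverse_edges E) A = complete_set E A"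
  by (simp add: complete_set_def)

lemma dens_split:
  assumes "finite B" "A \<subseteq> B"
  shows "dens B E k x = dens A E k x * dens (B - A) E k x"
  unfolding dens_def using assms by (simp add: prod.subset_diff mult.commute)

lemma dens_restrict:
  assumes "\<forall>s\<in>B. insert s (pa E s) \<subseteq> I"
  shows "dens B E k (restrict x I) = dens B E k x"
  by (rule dens_cong) (use assms in auto)

lemma dens_kcong:
  assumes "\<forall>s\<in>B. k s = k' s"
  shows "dens B E k x = dens B E k' x"
  unfolding dens_def using assms by (intro prod.cong) auto

lemma dens_Econg:
  assumes "\<forall>s\<in>B. pa E s = pa E' s"
  shows "dens B E k x = dens B E' k x"
  unfolding dens_def using assms by (intro prod.cong) auto

lemma DAG_model_dens:
  "DAG_model N E M = {P. prob_space P \<and> (\<exists>k. (\<forall>s\<in>N. is_kernel M (pa E s) s (k s)) \<and>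
          P = density (PiM N M) (\<lambda>x. ennreal (dens N E k x)))}"
  unfolding DAG_model_def dens_def ..

context product_sigma_finite
begin

lemma density_AE:
  assumes "finite N" "f \<in> borel_measurable (PiM N M)" "g \<in> borel_measurable (PiM N M)"
    "\<forall>x\<in>space (PiM N M). 0 \<le> f x" "\<forall>x\<in>space (PiM N M). 0 \<le> g x"
    "density (PiM N M) (\<lambda>x. ennreal (f x)) = density (PiM N M) (\<lambda>x. ennreal (g x))"
  shows "AE x in PiM N M. f x = g x"
proof -
  interpret sigma_finite_measure "PiM N M" by (rule sigma_finite[OF assms(1)])
  have "AE x in PiM N M. ennreal (f x) = ennreal (g x)"
    by (rule density_unique) (use assms in auto)
  then show ?thesis using AE_space by eventually_elim (use assms(4,5) in auto)
qed

lemma part1: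
  assumes "finite N" "E \<subseteq> N \<times> N" "acyclic E"
    and "\<forall>s\<in>N. complete_set E (pa E s) \<and> complete_set E (ch E s)"
    and g: "\<forall>u\<in>N. g u \<in> borel_measurable (M u) \<and> (\<forall>y\<in>space (M u). 0 \<le> g u y) \<and> (\<integral>\<^sup>+ y. ennreal (g u y) \<partial>M u) = 1"
    and "P \<in> DAG_model N E M"
  shows "P \<in> DAG_model N (reverse_edges E) M"
  using assms
proof (induct "card N" arbitrary: N E P)
  case 0
  then have "N = {}" by simp
  with 0 have "E = {}" by auto
  then have "reverse_edges E = E" by (simp add: reverse_edges_def)
  then show ?case using 0 by simp
next
  case (Suc n)
  note fin = Suc(3) and EN = Suc(4) and acy = Suc(5) and compl = Suc(6) and gN = Suc(7)
  have ne: "N \<noteq> {}" using Suc(2) by auto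
  obtain t where t: "t \<in> N" "\<forall>u\<in>N. (t,u) \<notin> E" using sink_exists[OF fin ne acy] by blast
  have tE: "(t,u) \<notin> E" for u using t EN by auto
  obtain k where kern: "\<forall>s\<in>N. is_kernel M (pa E s) s (k s)"
    and P: "P = density (PiM N M) (\<lambda>x. ennreal (dens N E k x))" and probP: "prob_space P"
    using Suc(8) unfolding DAG_model_dens by blast
  define N' where "N' = N - {t}"
  define E' where "E' = {(u,v). (u,v) \<in> E \<and> v \<noteq> t}"
  have NN': "N = insert t N'" and tN': "t \<notin> N'" and finN': "finite N'" using t fin by (auto simp: N'_def)
  have E'N': "E' \<subseteq> N' \<times> N'" using EN tE by (auto simp: E'_def N'_def)
  have acy': "acyclic E'" using acy by (rule acyclic_subset) (auto simp: E'_def)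
  have paE': "pa E' s = pa E s" if "s \<noteq> t" for s using that by (auto simp: pa_def E'_def)
  have chE': "ch E' s = ch E s - {t}" for s by (auto simp: ch_def E'_def)
  have paN: "\<forall>s\<in>N. pa E s \<subseteq> N" using EN by (auto simp: pa_def)
  have paN': "\<forall>s\<in>N'. pa E s \<subseteq> N'" using EN tE by (auto simp: pa_def N'_def)
  have compl_sub: "complete_set E' A" if "complete_set E A" "t \<notin> A" for A
    using that by (auto simp: complete_set_def joined_def E'_def)
  have compl': "\<forall>s\<in>N'. complete_set E' (pa E' s) \<and> complete_set E' (ch E' s)"
  proof
    fix s assume s: "s \<in> N'"
    then have st: "s \<noteq> t" using tN' by auto
    have "complete_set E (pa E s)" "complete_set E (ch E s)" using compl s by (auto simp: N'_def)
    moreover have "t \<notin> pa E s" using tE by (auto simp: pa_def)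
    moreover have "complete_set E (ch E s - {t})" using \<open>complete_set E (ch E s)\<close> by (auto simp: complete_set_def)
    ultimately show "complete_set E' (pa E' s) \<and> complete_set E' (ch E' s)"
      using compl_sub paE'[OF st] chE' by auto
  qed
  define P' where "P' = density (PiM N' M) (\<lambda>x. ennreal (dens N' E' k x))"
  have kern': "\<forall>s\<in>N'. is_kernel M (pa E' s) s (k s)" using kern paE' tN' by (auto simp: N'_def)
  have paE'N': "\<forall>s\<in>N'. pa E' s \<subseteq> N'" using E'N' by (auto simp: pa_def)
  have "P' \<in> DAG_model N' E' M"
    unfolding DAG_model_dens P'_def using dens_prob[OF finN' paE'N' acy' kern'] kern' by blast
  then have "P' \<in> DAG_model N' (reverse_edges E') M"
  proof (intro Suc(1))
    show "n = card N'" using Suc(2) t fin by (simp add: N'_def)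
    show "finite N'" by (rule finN')
    show "E' \<subseteq> N' \<times> N'" by (rule E'N')
    show "acyclic E'" by (rule acy')
    show "\<forall>s\<in>N'. complete_set E' (pa E' s) \<and> complete_set E' (ch E' s)" by (rule compl')
    show "\<forall>u\<in>N'. g u \<in> borel_measurable (M u) \<and> (\<forall>y\<in>space (M u). 0 \<le> g u y) \<and> (\<integral>\<^sup>+ y. ennreal (g u y) \<partial>M u) = 1"
      using gN by (auto simp: N'_def)
  qed
  then obtain q where q: "\<forall>s\<in>N'. is_kernel M (pa (reverse_edges E') s) s (q s)"
    and P'q: "P' = density (PiM N' M) (\<lambda>x. ennreal (dens N' (reverse_edges E') q x))"
    unfolding DAG_model_dens by blast
  have paRE'N': "\<forall>s\<in>N'. pa (reverse_edges E') s \<subseteq> N'" using E'N' by (auto simp: ch_def)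
  have AE1: "AE x in PiM N' M. dens N' E' k x = dens N' (reverse_edges E') q x"
  proof (rule density_AE[OF finN'])
    show "dens N' E' k \<in> borel_measurable (PiM N' M)" using kern' paE'N' by (intro dens_meas) auto
    show "dens N' (reverse_edges E') q \<in> borel_measurable (PiM N' M)" using q paRE'N' by (intro dens_meas) auto
    show "\<forall>x\<in>space (PiM N' M). 0 \<le> dens N' E' k x" by (intro ballI dens_nonneg[OF kern' paE'N']) auto
    show "\<forall>x\<in>space (PiM N' M). 0 \<le> dens N' (reverse_edges E') q x" by (intro ballI dens_nonneg[OF q paRE'N']) auto
    show "density (PiM N' M) (\<lambda>x. ennreal (dens N' E' k x)) = density (PiM N' M) (\<lambda>x. ennreal (dens N' (reverse_edges E') q x))"
      using P'q by (simp add: P'_def)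
  qed
  define C where "C = pa E t"
  have CN': "C \<subseteq> N'" using paN' t EN by (auto simp: C_def pa_def N'_def)
  have tC: "t \<notin> C" using tE by (auto simp: C_def pa_def)
  have finC: "finite C" using CN' finN' finite_subset by blast
  have chC: "ch E c \<subseteq> insert t C" if c: "c \<in> C" for c
  proof
    fix d assume d: "d \<in> ch E c"
    show "d \<in> insert t C"
    proof (cases "d = t")
      case False
      have cN: "c \<in> N" using c CN' by (auto simp: N'_def)
      have "t \<in> ch E c" using c by (simp add: C_def pa_def ch_def)
      then have "joined E d t" using compl cN d False by (auto simp: complete_set_def)
      then have "(d,t) \<in> E" using tE by (auto simp: joined_def)
      then show ?thesis by (simp add: C_def pa_def)
    qed simp
  qed
  have paRE'C: "\<forall>c\<in>C. pa (reverse_edges E') c \<subseteq> C" using chC chE' by auto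
  define V where "V = insert t C"
  have VN: "V \<subseteq> N" using CN' t by (auto simp: V_def N'_def)
  have finV: "finite V" using finC by (simp add: V_def)
  define h where "h v = dens C (reverse_edges E') q v * k t (restrict v C) (v t)" for v
  have qC: "\<forall>s\<in>C. is_kernel M (pa (reverse_edges E') s) s (q s)" using q CN' by auto
  have kt: "is_kernel M C t (k t)" using kern t by (simp add: C_def)
  have hm: "h \<in> borel_measurable (PiM V M)"
  proof -
    have "dens C (reverse_edges E') q \<in> borel_measurable (PiM V M)"
      using qC paRE'C by (intro dens_meas) (auto simp: V_def)
    moreover have "(\<lambda>v. k t (restrict v C) (v t)) \<in> borel_measurable (PiM V M)"
      by (rule kernel_meas[OF kt]) (auto simp: V_def)
    ultimately show ?thesis unfolding h_def[abs_def] by measurable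
  qed
  have hnn: "\<forall>x\<in>space (PiM V M). 0 \<le> h x"
  proof
    fix x assume x: "x \<in> space (PiM V M)"
    have "0 \<le> dens C (reverse_edges E') q x"
      using qC paRE'C x by (intro dens_nonneg[where I=V]) (auto simp: V_def)
    moreover have "0 \<le> k t (restrict x C) (x t)" by (rule kernel_nonneg[OF kt _ _ x]) (auto simp: V_def)
    ultimately show "0 \<le> h x" by (simp add: h_def)
  qed
  have hint: "(\<integral>\<^sup>+ x. ennreal (h x) \<partial>PiM V M) = 1"
  proof -
    have "(\<integral>\<^sup>+ x. ennreal (h x) \<partial>PiM (insert t C) M) = (\<integral>\<^sup>+ z. (\<integral>\<^sup>+ y. ennreal (h (z(t:=y))) \<partial>M t) \<partial>PiM C M)"
      by (rule product_nn_integral_insert[OF finC tC]) (use hm in \<open>simp add: V_def\<close>)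
    also have "\<dots> = (\<integral>\<^sup>+ z. ennreal (dens C (reverse_edges E') q z) \<partial>PiM C M)"
    proof (rule nn_integral_cong)
      fix z assume z: "z \<in> space (PiM C M)"
      have d0: "0 \<le> dens C (reverse_edges E') q z" using qC paRE'C z by (intro dens_nonneg[where I=C]) auto
      have dz: "dens C (reverse_edges E') q (z(t:=y)) = dens C (reverse_edges E') q z" for y
      proof (rule dens_cong, intro ballI)
        fix s i assume "s \<in> C" "i \<in> insert s (pa (reverse_edges E') s)"
        then have "i \<in> C" using paRE'C by auto
        then show "(z(t:=y)) i = z i" using tC by auto
      qed
      have rz: "restrict (z(t:=y)) C = z" for y
        using z tC by (auto simp: space_PiM PiE_def extensional_def fun_eq_iff)
      have "(\<integral>\<^sup>+ y. ennreal (h (z(t:=y))) \<partial>M t) = (\<integral>\<^sup>+ y. ennreal (dens C (reverse_edges E') q z) * ennreal (k t z y) \<partial>M t)"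
      proof (rule nn_integral_cong)
        fix y assume "y \<in> space (M t)"
        then have "0 \<le> k t z y" using kt z by (simp add: is_kernel_def)
        then show "ennreal (h (z(t:=y))) = ennreal (dens C (reverse_edges E') q z) * ennreal (k t z y)"
          by (simp add: h_def dz rz ennreal_mult d0)
      qed
      also have "\<dots> = ennreal (dens C (reverse_edges E') q z)"
        using kt z kernel_meas2[OF kt z] by (subst nn_integral_cmult) (auto simp: is_kernel_def)
      finally show "(\<integral>\<^sup>+ y. ennreal (h (z(t:=y))) \<partial>M t) = ennreal (dens C (reverse_edges E') q z)" .
    qed
    also have "\<dots> = 1"
      by (rule dens_integral1[OF finC paRE'C _ qC]) (simp add: acy')
    finally show ?thesis by (simp add: V_def)
  qed
  have paREV: "\<forall>u\<in>V. pa (reverse_edges E) u \<subseteq> V"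
    using chC tE by (auto simp: V_def ch_def)
  have complV: "\<forall>u\<in>V. \<forall>v\<in>V. u \<noteq> v \<longrightarrow> (u,v) \<in> reverse_edges E \<or> (v,u) \<in> reverse_edges E"
  proof (intro ballI impI)
    fix u v assume u: "u \<in> V" and v: "v \<in> V" and uv: "u \<noteq> v"
    have "complete_set E C" using compl t by (simp add: C_def)
    then have "joined E u v"
      using u v uv by (auto simp: V_def complete_set_def joined_def C_def pa_def)
    then show "(u,v) \<in> reverse_edges E \<or> (v,u) \<in> reverse_edges E" by (auto simp: joined_def reverse_edges_def)
  qed
  obtain q' where q': "\<forall>u\<in>V. is_kernel M (pa (reverse_edges E) u) u (q' u)"
    and hq': "AE x in PiM V M. h x = dens V (reverse_edges E) q' x"
    using chain_rule[OF finV paREV _ complV hm hnn hint, of g] acy gN VN by auto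
  define Q where "Q u = (if u \<in> V then q' u else q u)" for u
  have paNV: "pa (reverse_edges E) u = pa (reverse_edges E') u" if "u \<in> N" "u \<notin> V" for u
    using that tE by (auto simp: ch_def E'_def V_def C_def pa_def reverse_edges_def)
  have kernQ: "\<forall>u\<in>N. is_kernel M (pa (reverse_edges E) u) u (Q u)"
  proof
    fix u assume u: "u \<in> N"
    show "is_kernel M (pa (reverse_edges E) u) u (Q u)"
    proof (cases "u \<in> V")
      case True then show ?thesis using q' by (simp add: Q_def)
    next
      case False
      then have "u \<in> N'" using u by (auto simp: V_def N'_def)
      then show ?thesis using q paNV[OF u False] False by (simp add: Q_def)
    qed
  qed
  have AE2: "AE x in PiM N M. dens N' E' k (restrict x N') = dens N' (reverse_edges E') q (restrict x N')"
  proof (rule AE_restrict_lift[OF _ fin _ AE1])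
    show "N' \<subseteq> N" by (auto simp: N'_def)
    have "dens N' E' k \<in> borel_measurable (PiM N' M)" using kern' paE'N' by (intro dens_meas) auto
    moreover have "dens N' (reverse_edges E') q \<in> borel_measurable (PiM N' M)" using q paRE'N' by (intro dens_meas) auto
    ultimately show "{x \<in> space (PiM N' M). dens N' E' k x = dens N' (reverse_edges E') q x} \<in> sets (PiM N' M)"
      by measurable
  qed
  have AE3: "AE x in PiM N M. h (restrict x V) = dens V (reverse_edges E) q' (restrict x V)"
  proof (rule AE_restrict_lift[OF VN fin _ hq'])
    have "dens V (reverse_edges E) q' \<in> borel_measurable (PiM V M)" using q' paREV by (intro dens_meas) auto
    then show "{x \<in> space (PiM V M). h x = dens V (reverse_edges E) q' x} \<in> sets (PiM V M)"
      using hm by measurable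
  qed
  have "AE x in PiM N M. dens N E k x = dens N (reverse_edges E) Q x"
    using AE2 AE3
  proof eventually_elim
    case (elim x)
    have e1: "dens N E k x = dens N' E k x * k t (restrict x C) (x t)"
      unfolding dens_def using fin t by (simp add: N'_def C_def prod.remove mult.commute)
    have e2: "dens N' E k x = dens N' E' k (restrict x N')"
    proof -
      have "dens N' E' k (restrict x N') = dens N' E' k x"
        by (rule dens_restrict) (use paE'N' in auto)
      moreover have "dens N' E k x = dens N' E' k x"
      proof (rule dens_Econg, intro ballI)
        fix s assume "s \<in> N'" then have "s \<noteq> t" using tN' by auto
        then show "pa E s = pa E' s" using paE' by simp
      qed
      ultimately show ?thesis by simp
    qed
    have e3: "dens N' (reverse_edges E') q (restrict x N') = dens C (reverse_edges E') q x * dens (N' - C) (reverse_edges E') q x"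
      using paRE'N' by (subst dens_restrict) (auto intro: dens_split[OF finN' CN'])
    have e4: "h (restrict x V) = dens C (reverse_edges E') q x * k t (restrict x C) (x t)"
    proof -
      have "dens C (reverse_edges E') q (restrict x V) = dens C (reverse_edges E') q x"
        using paRE'C by (intro dens_restrict) (auto simp: V_def)
      moreover have "restrict (restrict x V) C = restrict x C" by (auto simp: V_def)
      ultimately show ?thesis by (simp add: h_def V_def)
    qed
    have e5: "dens V (reverse_edges E) q' (restrict x V) = dens V (reverse_edges E) Q x"
      using paREV by (subst dens_restrict) (auto intro!: dens_kcong simp: Q_def)
    have e6: "dens (N' - C) (reverse_edges E') q x = dens (N - V) (reverse_edges E) Q x"
    proof -
      have NV: "N - V = N' - C" by (auto simp: N'_def V_def)
      have "dens (N' - C) (reverse_edges E') q x = dens (N' - C) (reverse_edges E) q x"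
        using paNV by (intro dens_Econg) (auto simp: N'_def V_def)
      also have "\<dots> = dens (N' - C) (reverse_edges E) Q x"
        by (intro dens_kcong) (use tN' in \<open>auto simp: Q_def V_def\<close>)
      finally show ?thesis by (simp add: NV)
    qed
    have e7: "dens N (reverse_edges E) Q x = dens V (reverse_edges E) Q x * dens (N - V) (reverse_edges E) Q x"
      by (rule dens_split[OF fin VN])
    show ?case using elim e1 e2 e3 e4 e5 e6 e7 by (simp add: mult_ac)
  qed
  then have "P = density (PiM N M) (\<lambda>x. ennreal (dens N (reverse_edges E) Q x))"
  proof -
    have paRN: "\<forall>s\<in>N. pa (reverse_edges E) s \<subseteq> N" using EN by (auto simp: ch_def)
    have m1: "dens N E k \<in> borel_measurable (PiM N M)" using kern paN by (intro dens_meas) auto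
    have m2: "dens N (reverse_edges E) Q \<in> borel_measurable (PiM N M)" using kernQ paRN by (intro dens_meas) auto
    show ?thesis unfolding P
      by (rule density_cong) (use m1 m2 \<open>AE x in PiM N M. dens N E k x = dens N (reverse_edges E) Q x\<close> in auto)
  qed
  then show ?case unfolding DAG_model_dens using probP kernQ by blast
qed

end

lemma AE_exists:
  assumes "AE x in M. P x" "S \<in> sets M" "emeasure M S \<noteq> 0"
  shows "\<exists>x\<in>S. P x"
proof (rule ccontr)
  assume "\<not> (\<exists>x\<in>S. P x)"
  from assms(1) obtain N0 where N0: "{x\<in>space M. \<not> P x} \<subseteq> N0" "N0 \<in> sets M" "emeasure M N0 = 0"
    by (auto elim: AE_E)
  have "S \<subseteq> N0" using N0(1) sets.sets_into_space[OF assms(2)] \<open>\<not> (\<exists>x\<in>S. P x)\<close> by auto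
  then have "emeasure M S \<le> emeasure M N0" by (rule emeasure_mono) (rule N0(2))
  with N0(3) assms(3) show False by simp
qed

context product_sigma_finite
begin

lemma part2:
  assumes fin: "finite N" and EN: "E \<subseteq> N \<times> N" and acy: "acyclic E"
    and U: "\<forall>u\<in>N. U0 u \<in> sets (M u) \<and> U1 u \<in> sets (M u) \<and> U0 u \<inter> U1 u = {} \<and>
               emeasure (M u) (U0 u) = 1 \<and> emeasure (M u) (U1 u) = 1"
    and as: "(a,s) \<in> E" and bs: "(b,s) \<in> E" and ab: "a \<noteq> b" and nab: "(a,b) \<notin> E" "(b,a) \<notin> E"
    and nba: "(b,a) \<notin> (reverse_edges E)\<^sup>+"
  shows "\<exists>P. P \<in> DAG_model N E M \<and> P \<notin> DAG_model N (reverse_edges E) M"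
proof -
  have aN: "a \<in> N" and bN: "b \<in> N" and sN: "s \<in> N" using as bs EN by auto
  have ntriv: "(u,u) \<notin> E" for u using acy by (meson acyclic_def r_into_trancl')
  have sa: "s \<noteq> a" "s \<noteq> b" using as bs ntriv by auto
  define gg where "gg u y = (indicator (U0 u) y + indicator (U1 u) y) / (2::real)" for u y
  define \<kappa> where "\<kappa> z y = (indicator (if (z a \<in> U1 a) \<noteq> (z b \<in> U1 b) then U1 s else U0 s) y :: real)" for z :: "'i \<Rightarrow> 'a" and y
  define k where "k u = (if u = s then \<kappa> else (\<lambda>z y. gg u y))" for u
  have gg_nn: "0 \<le> gg u y" for u y by (simp add: gg_def)
  have gg_meas: "gg u \<in> borel_measurable (M u)" if "u \<in> N" for u
  proof -
    have [measurable]: "U0 u \<in> sets (M u)" "U1 u \<in> sets (M u)" using U that by auto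
    show ?thesis unfolding gg_def[abs_def] by measurable
  qed
  have gg_int: "(\<integral>\<^sup>+ y. ennreal (gg u y) \<partial>M u) = 1" if u: "u \<in> N" for u
  proof -
    have "(\<integral>\<^sup>+ y. ennreal (gg u y) \<partial>M u) = (\<integral>\<^sup>+ y. ennreal (1/2) * indicator (U0 u) y + ennreal (1/2) * indicator (U1 u) y \<partial>M u)"
      using U u by (intro nn_integral_cong) (auto simp: gg_def indicator_def)
    also have "\<dots> = ennreal (1/2) * emeasure (M u) (U0 u) + ennreal (1/2) * emeasure (M u) (U1 u)"
      using U u by (subst nn_integral_add) (auto simp: nn_integral_cmult_indicator)
    also have "\<dots> = 1" using U u ennreal_plus[of "1/2" "1/2"] by simp
    finally show ?thesis .
  qed
  have paEs: "a \<in> pa E s" "b \<in> pa E s" using as bs by (auto simp: pa_def)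
  have kern: "\<forall>u\<in>N. is_kernel M (pa E u) u (k u)"
  proof
    fix u assume u: "u \<in> N"
    show "is_kernel M (pa E u) u (k u)"
    proof (cases "u = s")
      case True
      have m: "case_prod \<kappa> \<in> borel_measurable (PiM (pa E s) M \<Otimes>\<^sub>M M s)"
      proof -
        have [measurable]: "U1 a \<in> sets (M a)" "U1 b \<in> sets (M b)" "U1 s \<in> sets (M s)" "U0 s \<in> sets (M s)"
          using U aN bN sN by auto
        have [measurable]: "(\<lambda>p. fst p a) \<in> measurable (PiM (pa E s) M \<Otimes>\<^sub>M M s) (M a)"
          using measurable_comp[OF measurable_fst measurable_component_singleton[OF paEs(1)]] by (simp add: comp_def)
        have [measurable]: "(\<lambda>p. fst p b) \<in> measurable (PiM (pa E s) M \<Otimes>\<^sub>M M s) (M b)"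
          using measurable_comp[OF measurable_fst measurable_component_singleton[OF paEs(2)]] by (simp add: comp_def)
        have "(\<lambda>p. if (fst p a \<in> U1 a) \<noteq> (fst p b \<in> U1 b) then indicator (U1 s) (snd p) else (indicator (U0 s) (snd p) :: real))
           \<in> borel_measurable (PiM (pa E s) M \<Otimes>\<^sub>M M s)"
          by measurable
        moreover have "case_prod \<kappa> = (\<lambda>p. if (fst p a \<in> U1 a) \<noteq> (fst p b \<in> U1 b) then indicator (U1 s) (snd p) else (indicator (U0 s) (snd p) :: real))"
          by (auto simp: \<kappa>_def fun_eq_iff)
        ultimately show ?thesis by simp
      qed
      have i: "(\<integral>\<^sup>+ y. ennreal (\<kappa> z y) \<partial>M s) = 1" for z
      proof -
        have "(\<integral>\<^sup>+ y. ennreal (\<kappa> z y) \<partial>M s) = emeasure (M s) (if (z a \<in> U1 a) \<noteq> (z b \<in> U1 b) then U1 s else U0 s)"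
          using U sN by (simp add: \<kappa>_def ennreal_indicator)
        then show ?thesis using U sN by simp
      qed
      show ?thesis using True m i by (simp add: is_kernel_def k_def \<kappa>_def)
    next
      case False
      have m: "case_prod (\<lambda>z y. gg u y) \<in> borel_measurable (PiM (pa E u) M \<Otimes>\<^sub>M M u)"
        using measurable_comp[OF measurable_snd gg_meas[OF u]] by (simp add: comp_def case_prod_beta')
      show ?thesis using False m gg_int[OF u] gg_nn by (simp add: is_kernel_def k_def)
    qed
  qed
  have paN: "\<forall>s\<in>N. pa E s \<subseteq> N" using EN by (auto simp: pa_def)
  define P where "P = density (PiM N M) (\<lambda>x. ennreal (dens N E k x))"
  have PG: "P \<in> DAG_model N E M"
    unfolding DAG_model_dens P_def using dens_prob[OF fin paN acy kern] kern by blast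
  define R where "R = reverse_edges E"
  have RN: "R \<subseteq> N \<times> N" using EN by (auto simp: R_def reverse_edges_def)
  have acyR: "acyclic R" using acy by (simp add: R_def)
  have paRN: "\<forall>u\<in>N. pa R u \<subseteq> N" using RN by (auto simp: pa_def)
  have "P \<notin> DAG_model N R M"
  proof
    assume "P \<in> DAG_model N R M"
    then obtain q where q: "\<forall>u\<in>N. is_kernel M (pa R u) u (q u)"
      and Pq: "P = density (PiM N M) (\<lambda>x. ennreal (dens N R q x))"
      unfolding DAG_model_dens by blast
    have AEN: "AE x in PiM N M. dens N E k x = dens N R q x"
    proof (rule density_AE[OF fin])
      show "dens N E k \<in> borel_measurable (PiM N M)" using kern paN by (intro dens_meas) auto
      show "dens N R q \<in> borel_measurable (PiM N M)" using q paRN by (intro dens_meas) auto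
      show "\<forall>x\<in>space (PiM N M). 0 \<le> dens N E k x" by (intro ballI dens_nonneg[OF kern paN]) auto
      show "\<forall>x\<in>space (PiM N M). 0 \<le> dens N R q x" by (intro ballI dens_nonneg[OF q paRN]) auto
      show "density (PiM N M) (\<lambda>x. ennreal (dens N E k x)) = density (PiM N M) (\<lambda>x. ennreal (dens N R q x))"
        using Pq by (simp add: P_def)
    qed
    define A where "A = {u. (u,a) \<in> R\<^sup>* \<or> (u,b) \<in> R\<^sup>*}"
    have inN: "u \<in> N" if "(u,v) \<in> R\<^sup>*" "v \<in> N" for u v
      using that RN by (induct rule: converse_rtrancl_induct) auto
    have AN: "A \<subseteq> N" using inN aN bN by (auto simp: A_def)
    have finA: "finite A" using AN fin finite_subset by blast
    have aA: "a \<in> A" and bA: "b \<in> A" by (auto simp: A_def)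
    have sA: "s \<in> A" using as by (auto simp: A_def R_def reverse_edges_def)
    have anc: "\<forall>u\<in>A. pa R u \<subseteq> A"
      by (auto simp: A_def pa_def intro: converse_rtrancl_into_rtrancl)
    have bsink: "(b,u) \<notin> R" if "u \<in> A" for u
    proof
      assume bu: "(b,u) \<in> R"
      show False
      proof (cases "(u,a) \<in> R\<^sup>*")
        case True
        then have "(b,a) \<in> R\<^sup>+" using bu by (rule rtrancl_into_trancl2[rotated])
        then show False using nba by (simp add: R_def)
      next
        case False
        then have "(u,b) \<in> R\<^sup>*" using that by (simp add: A_def)
        then have "(b,b) \<in> R\<^sup>+" using bu by (rule rtrancl_into_trancl2[rotated])
        then show False using acyR by (simp add: acyclic_def)
      qed
    qed
    define A' where "A' = A - {b}"
    have AA': "A = insert b A'" and bA': "b \<notin> A'" and finA': "finite A'" using bA finA by (auto simp: A'_def)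
    have paRb: "pa R b \<subseteq> A'" using anc bA bsink by (auto simp: A'_def pa_def)
    have a_npab: "a \<notin> pa R b" using nab by (auto simp: pa_def R_def reverse_edges_def)
    have b_npa: "b \<notin> pa R u" if "u \<in> A'" for u using bsink that by (auto simp: pa_def A'_def)
    define Kf where "Kf B w = (\<Prod>u\<in>B-{s}. gg u (w u)) * (indicator (if (w a \<in> U1 a) \<noteq> (w b \<in> U1 b) then U1 s else U0 s) (w s) :: real)" for B w
    have Kf_nn: "0 \<le> Kf B w" for B w unfolding Kf_def by (intro mult_nonneg_nonneg prod_nonneg) (auto simp: gg_nn)
    have densKf: "dens N E k w = Kf N w" for w
    proof -
      have "dens N E k w = k s (restrict w (pa E s)) (w s) * (\<Prod>u\<in>N-{s}. k u (restrict w (pa E u)) (w u))"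
        unfolding dens_def using fin sN by (rule prod.remove)
      also have "(\<Prod>u\<in>N-{s}. k u (restrict w (pa E u)) (w u)) = (\<Prod>u\<in>N-{s}. gg u (w u))"
        by (rule prod.cong) (auto simp: k_def)
      finally have d: "dens N E k w = k s (restrict w (pa E s)) (w s) * (\<Prod>u\<in>N-{s}. gg u (w u))" .
      have "k s (restrict w (pa E s)) (w s) = indicator (if (w a \<in> U1 a) \<noteq> (w b \<in> U1 b) then U1 s else U0 s) (w s)"
        using paEs by (simp add: k_def \<kappa>_def)
      with d show ?thesis unfolding Kf_def by (metis mult.commute)
    qed
    have AsubN: "A \<union> (N - A) = N" using AN by auto
    have Kf_merge: "Kf N (merge A (N-A) (x,y)) = Kf A x * (\<Prod>u\<in>N-A. gg u (y u))" for x y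
    proof -
      have "(\<Prod>u\<in>N-{s}. gg u (merge A (N-A) (x,y) u)) = (\<Prod>u\<in>A-{s}. gg u (merge A (N-A) (x,y) u)) * (\<Prod>u\<in>(N-{s})-(A-{s}). gg u (merge A (N-A) (x,y) u))"
        using fin AN by (subst prod.subset_diff[of "A-{s}" "N-{s}"]) (auto simp: mult.commute)
      also have "(N-{s})-(A-{s}) = N - A" using sA by auto
      also have "(\<Prod>u\<in>A-{s}. gg u (merge A (N-A) (x,y) u)) = (\<Prod>u\<in>A-{s}. gg u (x u))"
        by (rule prod.cong) (auto simp: merge_def)
      also have "(\<Prod>u\<in>N-A. gg u (merge A (N-A) (x,y) u)) = (\<Prod>u\<in>N-A. gg u (y u))"
        by (rule prod.cong) (auto simp: merge_def)
      finally show ?thesis using aA bA sA by (simp add: Kf_def merge_def mult_ac)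
    qed
    have S1: "AE x in PiM A M. Kf A x = dens A R q x"
    proof -
      have "AE x in PiM (A \<union> (N-A)) M. dens N E k x = dens N R q x" unfolding AsubN by (rule AEN)
      then have "AE x in PiM A M. AE y in PiM (N-A) M. dens N E k (merge A (N-A) (x,y)) = dens N R q (merge A (N-A) (x,y))"
        by (rule AE_merge_split[rotated 3]) (use fin finA in auto)
      then show ?thesis using AE_space
      proof eventually_elim
        case (elim x)
        then have x: "x \<in> space (PiM A M)" by simp
        have "(\<integral>\<^sup>+ y. ennreal (dens N E k (merge A (N-A) (x,y))) \<partial>PiM (N-A) M) = (\<integral>\<^sup>+ y. ennreal (dens N R q (merge A (N-A) (x,y))) \<partial>PiM (N-A) M)"
          by (rule nn_integral_cong_AE) (use elim in auto)
        also have "\<dots> = ennreal (dens A R q x)"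
          by (rule marginal[OF fin AN paRN _ acyR q x]) (use anc in auto)
        also have "(\<integral>\<^sup>+ y. ennreal (dens N E k (merge A (N-A) (x,y))) \<partial>PiM (N-A) M) = (\<integral>\<^sup>+ y. ennreal (Kf A x) * (\<Prod>u\<in>N-A. ennreal (gg u (y u))) \<partial>PiM (N-A) M)"
          by (rule nn_integral_cong) (simp add: densKf Kf_merge ennreal_mult Kf_nn gg_nn prod_nonneg prod_ennreal)
        also have "\<dots> = ennreal (Kf A x) * (\<integral>\<^sup>+ y. (\<Prod>u\<in>N-A. ennreal (gg u (y u))) \<partial>PiM (N-A) M)"
          using gg_meas by (subst nn_integral_cmult) (auto intro!: borel_measurable_prod_ennreal measurable_compose[OF measurable_component_singleton] simp: measurable_compose[OF _ measurable_ennreal])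
        also have "(\<integral>\<^sup>+ y. (\<Prod>u\<in>N-A. ennreal (gg u (y u))) \<partial>PiM (N-A) M) = (\<Prod>u\<in>N-A. \<integral>\<^sup>+ y. ennreal (gg u y) \<partial>M u)"
          using fin gg_meas by (subst product_nn_integral_prod) auto
        also have "\<dots> = 1" using gg_int by (intro prod.neutral) auto
        finally have "ennreal (Kf A x) = ennreal (dens A R q x)" by simp
        moreover have "0 \<le> dens A R q x" using q anc AN x by (intro dens_nonneg[where I=A and M=M]) auto
        ultimately show ?case using Kf_nn by simp
      qed
    qed
    have dsplitb: "dens A R q x = dens A' R q x * q b (restrict x (pa R b)) (x b)" for x
      unfolding dens_def by (subst AA') (simp add: finA' bA' mult.commute)
    have Phi: "AE x in PiM (insert a (A - {a})) M. Kf A x = dens A' R q x * q b (restrict x (pa R b)) (x b)"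
      unfolding insert_Diff[OF aA] using S1 by (simp add: dsplitb)
    define A2 where "A2 = A - {a} - {b}"
    have A2: "A - {a} = insert b A2" "b \<notin> A2" "finite A2" "finite (A - {a})" "a \<notin> A - {a}"
      using bA ab finA by (auto simp: A2_def)
    have "AE z in PiM (A - {a}) M. AE ya in M a. Kf A (z(a:=ya)) = dens A' R q (z(a:=ya)) * q b (restrict (z(a:=ya)) (pa R b)) ((z(a:=ya)) b)"
      by (rule AE_upd_split[OF A2(4,5) Phi])
    then have "AE z in PiM (insert b A2) M. AE ya in M a. Kf A (z(a:=ya)) = dens A' R q (z(a:=ya)) * q b (restrict (z(a:=ya)) (pa R b)) ((z(a:=ya)) b)"
      by (simp only: A2(1))
    then have AE2: "AE z in PiM A2 M. AE yb in M b. AE ya in M a. Kf A (z(b:=yb,a:=ya)) = dens A' R q (z(b:=yb,a:=ya)) * q b (restrict (z(b:=yb,a:=ya)) (pa R b)) ((z(b:=yb,a:=ya)) b)"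
      by (rule AE_upd_split[OF A2(3,2)])
    have A2N: "A2 \<subseteq> N" using AN by (auto simp: A2_def)
    have "emeasure (PiM A2 M) (PiE A2 U0) = (\<Prod>u\<in>A2. emeasure (M u) (U0 u))"
      using A2N U by (intro emeasure_PiM[OF A2(3)]) auto
    also have "\<dots> = 1" using A2N U by (intro prod.neutral) auto
    finally have mA2: "emeasure (PiM A2 M) (PiE A2 U0) \<noteq> 0" by simp
    have sA2: "PiE A2 U0 \<in> sets (PiM A2 M)" using A2N U by (intro sets_PiM_I_finite A2(3)) auto
    obtain z where z: "z \<in> PiE A2 U0" and zAE: "AE yb in M b. AE ya in M a. Kf A (z(b:=yb,a:=ya)) = dens A' R q (z(b:=yb,a:=ya)) * q b (restrict (z(b:=yb,a:=ya)) (pa R b)) ((z(b:=yb,a:=ya)) b)"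
      using AE_exists[OF AE2 sA2 mA2] by blast
    define Phi where "Phi yb ya \<longleftrightarrow> Kf A (z(b:=yb,a:=ya)) = dens A' R q (z(b:=yb,a:=ya)) * q b (restrict (z(b:=yb,a:=ya)) (pa R b)) ((z(b:=yb,a:=ya)) b)" for yb ya
    have Ub: "U0 b \<in> sets (M b)" "U1 b \<in> sets (M b)" "emeasure (M b) (U0 b) \<noteq> 0" "emeasure (M b) (U1 b) \<noteq> 0" "U0 b \<inter> U1 b = {}"
      using U bN by auto
    have Ua: "U0 a \<in> sets (M a)" "U1 a \<in> sets (M a)" "emeasure (M a) (U0 a) \<noteq> 0" "emeasure (M a) (U1 a) \<noteq> 0" "U0 a \<inter> U1 a = {}"
      using U aN by auto
    obtain yb0 where yb0: "yb0 \<in> U0 b" "AE ya in M a. Phi yb0 ya"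
      using AE_exists[OF zAE Ub(1) Ub(3)] unfolding Phi_def by blast
    obtain yb1 where yb1: "yb1 \<in> U1 b" "AE ya in M a. Phi yb1 ya"
      using AE_exists[OF zAE Ub(2) Ub(4)] unfolding Phi_def by blast
    obtain ya0 where ya0: "ya0 \<in> U0 a" "Phi yb0 ya0"
      using AE_exists[OF yb0(2) Ua(1) Ua(3)] by blast
    have "AE ya in M a. Phi yb0 ya \<and> Phi yb1 ya" using yb0(2) yb1(2) by eventually_elim simp
    then obtain ya1 where ya1: "ya1 \<in> U1 a" "Phi yb0 ya1" "Phi yb1 ya1"
      using AE_exists[OF _ Ua(2) Ua(4)] by blast
    define c :: real where "c = (1/2) ^ card (A - {s})"
    have c0: "c \<noteq> 0" by (simp add: c_def)
    have sA2': "s \<in> A2" using sA sa by (auto simp: A2_def)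
    have Kfval: "Kf A (z(b:=yb,a:=ya)) = (if (ya \<in> U1 a) = (yb \<in> U1 b) then c else 0)"
      if yb: "yb \<in> U0 b \<union> U1 b" and ya: "ya \<in> U0 a \<union> U1 a" for yb ya
    proof -
      have "(\<Prod>u\<in>A-{s}. gg u ((z(b:=yb,a:=ya)) u)) = (\<Prod>u\<in>A-{s}. 1/2)"
      proof (rule prod.cong[OF refl])
        fix u assume u: "u \<in> A - {s}"
        have "(z(b:=yb,a:=ya)) u \<in> U0 u \<union> U1 u"
        proof (cases "u = a")
          case True then show ?thesis using ya by simp
        next
          case False
          show ?thesis
          proof (cases "u = b")
            case True then show ?thesis using yb False by simp
          next
            case False': False
            then have "u \<in> A2" using u False by (auto simp: A2_def)
            then show ?thesis using z False False' by (auto simp: PiE_def)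
          qed
        qed
        moreover have "U0 u \<inter> U1 u = {}" using U u AN by auto
        ultimately show "gg u ((z(b:=yb,a:=ya)) u) = 1/2" by (auto simp: gg_def indicator_def)
      qed
      also have "\<dots> = c" by (simp add: c_def)
      finally have p: "(\<Prod>u\<in>A-{s}. gg u ((z(b:=yb,a:=ya)) u)) = c" .
      have zs: "(z(b:=yb,a:=ya)) s = z s" using sa by simp
      have zsU: "z s \<in> U0 s" "z s \<notin> U1 s" using z sA2' U sN by (auto simp: PiE_def)
      show ?thesis unfolding Kf_def p using zs zsU ab by (auto simp: indicator_def)
    qed
    have Dval: "dens A' R q (z(b:=yb,a:=ya)) = dens A' R q (z(a:=ya))" for yb ya
    proof (rule dens_cong, intro ballI)
      fix u i assume u: "u \<in> A'" and i: "i \<in> insert u (pa R u)"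
      have "i \<noteq> b" using u i b_npa[OF u] bA' by auto
      then show "(z(b:=yb,a:=ya)) i = (z(a:=ya)) i" by simp
    qed
    have bnpb: "b \<notin> pa R b" using paRb bA' by auto
    have Qval: "q b (restrict (z(b:=yb,a:=ya)) (pa R b)) ((z(b:=yb,a:=ya)) b) = q b (restrict z (pa R b)) yb" for yb ya
    proof -
      have "restrict (z(b:=yb,a:=ya)) (pa R b) = restrict z (pa R b)"
        using a_npab bnpb by (auto simp: restrict_def fun_eq_iff)
      then show ?thesis using ab by simp
    qed
    have yb0': "yb0 \<notin> U1 b" using yb0 Ub(5) by auto
    have ya0': "ya0 \<notin> U1 a" using ya0 Ua(5) by auto
    have e1: "c = dens A' R q (z(a:=ya0)) * q b (restrict z (pa R b)) yb0"
      using ya0(2) Kfval[of yb0 ya0] yb0(1) ya0(1) yb0' ya0' unfolding Phi_def Dval Qval by simp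
    have e2: "0 = dens A' R q (z(a:=ya1)) * q b (restrict z (pa R b)) yb0"
      using ya1(2) Kfval[of yb0 ya1] yb0(1) ya1(1) yb0' unfolding Phi_def Dval Qval by simp
    have e3: "c = dens A' R q (z(a:=ya1)) * q b (restrict z (pa R b)) yb1"
      using ya1(3) Kfval[of yb1 ya1] yb1(1) ya1(1) unfolding Phi_def Dval Qval by simp
    from e1 c0 have "q b (restrict z (pa R b)) yb0 \<noteq> 0" by auto
    with e2 have "dens A' R q (z(a:=ya1)) = 0" by simp
    with e3 c0 show False by simp
  qed
  then show ?thesis using PG unfolding R_def by blast
qed

end

lemma is_kernel_cong:
  assumes "\<forall>u\<in>insert s P. M u = M' u"
  shows "is_kernel M P s ks = is_kernel M' P s ks"
proof -
  have "PiM P M = PiM P M'" using assms by (intro PiM_cong) auto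
  moreover have "M s = M' s" using assms by auto
  ultimately show ?thesis unfolding is_kernel_def by simp
qed

lemma DAG_model_cong:
  assumes "\<forall>u\<in>N. M u = M' u" "\<forall>s\<in>N. pa E s \<subseteq> N"
  shows "DAG_model N E M = DAG_model N E M'"
proof -
  have P: "PiM N M = PiM N M'" using assms by (intro PiM_cong) auto
  have K: "(\<forall>s\<in>N. is_kernel M (pa E s) s (k s)) = (\<forall>s\<in>N. is_kernel M' (pa E s) s (k s))" for k
    using assms is_kernel_cong[of s "pa E s" M M' "k s" for s] by blast
  show ?thesis unfolding DAG_model_def P K ..
qed

lemma state_space_sets:
  assumes "state_space Ms" "\<exists>a\<in>space Ms. \<exists>b\<in>space Ms. a \<noteq> b"
  shows "sigma_finite_measure Ms \<and> (\<exists>U0 U1. U0 \<in> sets Ms \<and> U1 \<in> sets Ms \<and> U0 \<inter> U1 = {} \<and>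
           emeasure Ms U0 = 1 \<and> emeasure Ms U1 = 1)"
  using assms(1) unfolding state_space_def
proof (elim disjE exE conjE)
  fix A :: "(nat \<Rightarrow> real) set" assume A: "finite A" "A \<noteq> {}" "Ms = count_space A"
  then obtain a b where ab: "a \<in> A" "b \<in> A" "a \<noteq> b" using assms(2) by auto
  have "finite_measure Ms" using A by (simp add: finite_measure_count_space)
  then have "sigma_finite_measure Ms" by (rule finite_measure.sigma_finite_measure)
  moreover have "{a} \<in> sets Ms \<and> {b} \<in> sets Ms \<and> {a} \<inter> {b} = {} \<and> emeasure Ms {a} = 1 \<and> emeasure Ms {b} = 1"
    using A ab by auto
  ultimately show ?thesis by blast
next
  fix d assume d: "Ms = PiM {..<d} (\<lambda>_. lborel)"
  interpret ps: product_sigma_finite "\<lambda>_::nat. lborel :: real measure"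
    by standard
  have sf: "sigma_finite_measure Ms" unfolding d by (rule ps.sigma_finite) simp
  have "d \<noteq> 0"
  proof
    assume "d = 0"
    then have "space Ms = {\<lambda>_. undefined}" using d by (simp add: space_PiM)
    then show False using assms(2) by auto
  qed
  then have d0: "0 \<in> {..<d}" by simp
  define U0 where "U0 = PiE {..<d} (\<lambda>i. {0..1::real})"
  define U1 where "U1 = PiE {..<d} (\<lambda>i. if i = 0 then {2..3::real} else {0..1})"
  have "U0 \<in> sets Ms" unfolding U0_def d by (rule sets_PiM_I_finite) auto
  moreover have "U1 \<in> sets Ms" unfolding U1_def d by (rule sets_PiM_I_finite) auto
  moreover have "U0 \<inter> U1 = {}"
  proof -
    have "x \<notin> U1" if "x \<in> U0" for x
    proof
      assume "x \<in> U1"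
      then have "x 0 \<in> (if (0::nat) = 0 then {2..3} else {0..1::real})" unfolding U1_def by (rule PiE_mem) (rule d0)
      then have "x 0 \<ge> 2" by simp
      moreover have "x 0 \<in> {0..1::real}" using that unfolding U0_def by (rule PiE_mem) (rule d0)
      ultimately show False by simp
    qed
    then show ?thesis by blast
  qed
  moreover have "emeasure Ms U0 = 1"
    unfolding U0_def d by (subst ps.emeasure_PiM) auto
  moreover have "emeasure Ms U1 = 1"
    unfolding U1_def d by (subst ps.emeasure_PiM) (auto intro!: prod.neutral)
  ultimately show ?thesis using sf by blast
qed


theorem corollary2:
  fixes N :: "'n set" and E :: "('n \<times> 'n) set" and M :: "'n \<Rightarrow> (nat \<Rightarrow> real) measure"
  assumes "finite N" and "E \<subseteq> N \<times> N" and "acyclic E"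
    and "\<forall>s\<in>N. state_space (M s)"
    and "\<forall>s\<in>N. \<exists>a\<in>space (M s). \<exists>b\<in>space (M s). a \<noteq> b"
  shows "DAG_model N E M = DAG_model N (reverse_edges E) M \<longleftrightarrow>
         (\<forall>s\<in>N. complete_set E (pa E s) \<and> complete_set E (ch E s))"
proof -
  note fin = assms(1) and EN = assms(2) and acy = assms(3)
  have ss: "\<forall>u\<in>N. sigma_finite_measure (M u) \<and> (\<exists>U0 U1. U0 \<in> sets (M u) \<and> U1 \<in> sets (M u) \<and> U0 \<inter> U1 = {} \<and>
           emeasure (M u) U0 = 1 \<and> emeasure (M u) U1 = 1)"
  proof
    fix u assume u: "u \<in> N"
    show "sigma_finite_measure (M u) \<and> (\<exists>U0 U1. U0 \<in> sets (M u) \<and> U1 \<in> sets (M u) \<and> U0 \<inter> U1 = {} \<and>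
           emeasure (M u) U0 = 1 \<and> emeasure (M u) U1 = 1)"
      by (rule state_space_sets) (use assms(4,5) u in auto)
  qed
  have "\<forall>u\<in>N. \<exists>p. fst p \<in> sets (M u) \<and> snd p \<in> sets (M u) \<and> fst p \<inter> snd p = {} \<and>
           emeasure (M u) (fst p) = 1 \<and> emeasure (M u) (snd p) = 1"
  proof
    fix u assume u: "u \<in> N"
    then obtain A B where "A \<in> sets (M u) \<and> B \<in> sets (M u) \<and> A \<inter> B = {} \<and>
           emeasure (M u) A = 1 \<and> emeasure (M u) B = 1" using ss by blast
    then show "\<exists>p. fst p \<in> sets (M u) \<and> snd p \<in> sets (M u) \<and> fst p \<inter> snd p = {} \<and>
           emeasure (M u) (fst p) = 1 \<and> emeasure (M u) (snd p) = 1"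
      by (intro exI[of _ "(A,B)"]) simp
  qed
  then have "\<exists>f. \<forall>u\<in>N. fst (f u) \<in> sets (M u) \<and> snd (f u) \<in> sets (M u) \<and> fst (f u) \<inter> snd (f u) = {} \<and>
           emeasure (M u) (fst (f u)) = 1 \<and> emeasure (M u) (snd (f u)) = 1"
    by (rule bchoice)
  then obtain f where f: "\<forall>u\<in>N. fst (f u) \<in> sets (M u) \<and> snd (f u) \<in> sets (M u) \<and> fst (f u) \<inter> snd (f u) = {} \<and>
           emeasure (M u) (fst (f u)) = 1 \<and> emeasure (M u) (snd (f u)) = 1"
    by (elim exE) (rule that)
  define U0 where "U0 u = fst (f u)" for u
  define U1 where "U1 u = snd (f u)" for u
  define M' where "M' u = (if u \<in> N then M u else count_space {undefined})" for u
  have MM': "\<forall>u\<in>N. M u = M' u" by (simp add: M'_def)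
  interpret product_sigma_finite M'
  proof (rule product_sigma_finite.intro)
    fix i show "sigma_finite_measure (M' i)"
    proof (cases "i \<in> N")
      case True then show ?thesis using ss by (simp add: M'_def)
    next
      case False
      have "finite_measure (count_space {undefined::nat \<Rightarrow> real})" by (simp add: finite_measure_count_space)
      then show ?thesis using False by (simp add: M'_def finite_measure.sigma_finite_measure)
    qed
  qed
  have U: "\<forall>u\<in>N. U0 u \<in> sets (M' u) \<and> U1 u \<in> sets (M' u) \<and> U0 u \<inter> U1 u = {} \<and>
               emeasure (M' u) (U0 u) = 1 \<and> emeasure (M' u) (U1 u) = 1"
    using f by (simp add: M'_def U0_def U1_def)
  have eqM: "DAG_model N F M = DAG_model N F M'" if "F \<subseteq> N \<times> N" for F
    using that by (intro DAG_model_cong[OF MM']) (auto simp: pa_def)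
  have REN: "reverse_edges E \<subseteq> N \<times> N" using EN by (auto simp: reverse_edges_def)
  define g where "g u y = (indicator (U0 u) y :: real)" for u y
  have g: "\<forall>u\<in>N. g u \<in> borel_measurable (M' u) \<and> (\<forall>y\<in>space (M' u). 0 \<le> g u y) \<and> (\<integral>\<^sup>+ y. ennreal (g u y) \<partial>M' u) = 1"
    using U by (auto simp: g_def[abs_def] ennreal_indicator)
  have key: "\<exists>P. P \<in> DAG_model N F M' \<and> P \<notin> DAG_model N (reverse_edges F) M'"
    if F: "F \<subseteq> N \<times> N" "acyclic F" and ab: "(a,s) \<in> F" "(b,s) \<in> F" "a \<noteq> b" "\<not> joined F a b" for F a b s
  proof (cases "(b,a) \<in> (reverse_edges F)\<^sup>+")
    case False
    have nj: "(a,b) \<notin> F" "(b,a) \<notin> F" using ab(4) by (auto simp: joined_def)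
    show ?thesis by (rule part2[OF fin F(1,2) U ab(1,2,3) nj False])
  next
    case True
    have "(a,b) \<notin> (reverse_edges F)\<^sup>+"
    proof
      assume "(a,b) \<in> (reverse_edges F)\<^sup>+"
      then have "(a,a) \<in> (reverse_edges F)\<^sup>+" using True by (rule trancl_trans)
      moreover have "acyclic (reverse_edges F)" using F(2) by simp
      ultimately show False by (simp add: acyclic_def)
    qed
    moreover have nj: "(a,b) \<notin> F" "(b,a) \<notin> F" using ab(4) by (auto simp: joined_def)
    ultimately show ?thesis using ab(3) by (intro part2[OF fin F(1,2) U ab(2) ab(1) _ nj(2) nj(1)]) auto
  qed
  show ?thesis
  proof
    assume eq: "DAG_model N E M = DAG_model N (reverse_edges E) M"
    then have eq': "DAG_model N E M' = DAG_model N (reverse_edges E) M'" using eqM[OF EN] eqM[OF REN] by simp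
    show "\<forall>s\<in>N. complete_set E (pa E s) \<and> complete_set E (ch E s)"
    proof (rule ccontr)
      assume "\<not> (\<forall>s\<in>N. complete_set E (pa E s) \<and> complete_set E (ch E s))"
      then obtain s where "s \<in> N" "\<not> complete_set E (pa E s) \<or> \<not> complete_set E (ch E s)" by blast
      then show False
      proof (elim disjE)
        assume "\<not> complete_set E (pa E s)"
        then obtain a b where "a \<in> pa E s" "b \<in> pa E s" "a \<noteq> b" "\<not> joined E a b" by (auto simp: complete_set_def)
        then obtain P where "P \<in> DAG_model N E M'" "P \<notin> DAG_model N (reverse_edges E) M'"
          using key[OF EN acy, of a s b] by (auto simp: pa_def)
        then show False using eq' by simp
      next
        assume "\<not> complete_set E (ch E s)"
        then obtain a b where "a \<in> ch E s" "b \<in> ch E s" "a \<noteq> b" "\<not> joined E a b" by (auto simp: complete_set_def)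
        then have r12: "(a,s) \<in> reverse_edges E" "(b,s) \<in> reverse_edges E"
          by (auto simp: ch_def reverse_edges_def)
        have r: "(a,s) \<in> reverse_edges E" "(b,s) \<in> reverse_edges E" "\<not> joined (reverse_edges E) a b" "acyclic (reverse_edges E)"
          using r12 acy \<open>\<not> joined E a b\<close> by simp_all
        obtain P where "P \<in> DAG_model N (reverse_edges E) M'" "P \<notin> DAG_model N (reverse_edges (reverse_edges E)) M'"
          using key[OF REN r(4) r(1,2) \<open>a \<noteq> b\<close> r(3)] by blast
        then show False using eq' by simp
      qed
    qed
  next
    assume c: "\<forall>s\<in>N. complete_set E (pa E s) \<and> complete_set E (ch E s)"
    have "DAG_model N E M' \<subseteq> DAG_model N (reverse_edges E) M'"
    proof
      fix P assume "P \<in> DAG_model N E M'"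
      then show "P \<in> DAG_model N (reverse_edges E) M'" by (rule part1[OF fin EN acy c g])
    qed
    moreover have "DAG_model N (reverse_edges E) M' \<subseteq> DAG_model N (reverse_edges (reverse_edges E)) M'"
    proof
      fix P assume P: "P \<in> DAG_model N (reverse_edges E) M'"
      have acyR: "acyclic (reverse_edges E)" using acy by simp
      have cR: "\<forall>s\<in>N. complete_set (reverse_edges E) (pa (reverse_edges E) s) \<and> complete_set (reverse_edges E) (ch (reverse_edges E) s)"
        using c by simp
      show "P \<in> DAG_model N (reverse_edges (reverse_edges E)) M'" by (rule part1[OF fin REN acyR cR g P])
    qed
    ultimately have "DAG_model N E M' = DAG_model N (reverse_edges E) M'" by auto
    then show "DAG_model N E M = DAG_model N (reverse_edges E) M" using eqM[OF EN] eqM[OF REN] by simp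
  qed
qed


end
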